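(* Let $M'=M[D,K]$ be a compatible minor of the weighted uncertainty matroid $\mathcal{M}$. Let $e$ be a non-trivial element of $M'$ such that (i) there exists a circuit $C$ of $M'$ with $e\in C$, (ii) $w_e=L_e$, (iii) $e$ has maximum weight in $C$, and (iv) $e$ has maximum query cost in $C\cap E^L_{w_e}$. Then $M[D\cup\{e\},K]$ is a compatible minor of $\mathcal{M}$.
   Context: A weighted uncertainty matroid $\mathcal{M}=(E,\mathcal{I},A,w)$ consists of a matroid $M=(E,\mathcal{I})$ on a finite set $E$, for each $e\in E$ a non-empty finite union $A_e$ of bounded real intervals (each open or closed), a weight $w_e\in A_e$, and a query cost $c_e\ge0$. $L_e=\inf A_e$, $U_e=\sup A_e$; $e$ is trivial if $A_e=\{w_e\}$. For a real $x$, $E^L_x=\{e\in E: L_e=x \text{ and } e \text{ non-trivial}\}$. A minimum-weight basis (MWB) is a basis minimizing total weight. A weight assignment is $w^*$ with $w^*_e\in A_e$, consistent with $Q$ if $w^*_e=w_e$ on $Q$. $Q$ verifies an MWB $B$ if for every weight assignment consistent with $Q$, $B$ is an MWB with respect to it; a certificate for $\mathcal{M}$ is a set verifying some MWB, and $c^*$ denotes the minimum cost $\sum_{e\in Q}c_e$ of a certificate for $\mathcal{M}$. For $D,K\subseteq E$, $M[D,K]$ is the matroid obtained from $M$ by deleting $D$ and contracting $K$, ground set $E\setminus(D\cup K)$, weights restricted. $M[D,K]$ is a compatible minor if there is a set $Q$ of cost $c^*$ verifying an MWB $B$ of $\mathcal{M}$ with $K\subseteq B$, $D\cap B=\emptyset$.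 *)

theory Defs
  imports Main "HOL.Real"
begin

definition matroid :: "'a set \<Rightarrow> ('a set \<Rightarrow> bool) \<Rightarrow> bool" where
  "matroid E indep \<longleftrightarrow>
     finite E \<and> indep {} \<and> (\<forall>I. indep I \<longrightarrow> I \<subseteq> E) \<and>
     (\<forall>I J. indep J \<and> I \<subseteq> J \<longrightarrow> indep I) \<and>
     (\<forall>I J. indep I \<and> indep J \<and> card I < card J \<longrightarrow> (\<exists>x\<in>J - I. indep (insert x I)))"

definition basis_of :: "('a set \<Rightarrow> bool) \<Rightarrow> 'a set \<Rightarrow> 'a set \<Rightarrow> bool" where
  "basis_of indep X B \<longleftrightarrow> B \<subseteq> X \<and> indep B \<and>
     (\<forall>B'. B \<subseteq> B' \<and> B' \<subseteq> X \<and> indep B' \<longrightarrow> B' = B)"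

definition circuit_of :: "'a set \<Rightarrow> ('a set \<Rightarrow> bool) \<Rightarrow> 'a set \<Rightarrow> bool" where
  "circuit_of E indep C \<longleftrightarrow> C \<subseteq> E \<and> \<not> indep C \<and> (\<forall>x\<in>C. indep (C - {x}))"

text \<open>Independence predicate of the minor M[D,K] = (M \ D) / K, ground set E - (D \<union> K):
  I is independent iff I \<union> J is independent in M for a maximal independent subset J of K.\<close>
definition minor_indep :: "'a set \<Rightarrow> ('a set \<Rightarrow> bool) \<Rightarrow> 'a set \<Rightarrow> 'a set \<Rightarrow> 'a set \<Rightarrow> bool" where
  "minor_indep E indep D K I \<longleftrightarrow> I \<subseteq> E - (D \<union> K) \<and>
     (\<exists>J. basis_of indep K J \<and> indep (I \<union> J))"

definition unc_interval :: "real set \<Rightarrow> bool" where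
  "unc_interval S \<longleftrightarrow> (\<exists>a b. a \<le> b \<and> S = {a..b}) \<or> (\<exists>a b. a < b \<and> S = {a<..<b})"

definition unc_area :: "real set \<Rightarrow> bool" where
  "unc_area S \<longleftrightarrow> (\<exists>F. finite F \<and> F \<noteq> {} \<and> (\<forall>I\<in>F. unc_interval I) \<and> S = \<Union>F)"

definition wu_matroid :: "'a set \<Rightarrow> ('a set \<Rightarrow> bool) \<Rightarrow> ('a \<Rightarrow> real set) \<Rightarrow> ('a \<Rightarrow> real) \<Rightarrow> ('a \<Rightarrow> real) \<Rightarrow> bool" where
  "wu_matroid E indep A w c \<longleftrightarrow> matroid E indep \<and>
     (\<forall>e\<in>E. unc_area (A e) \<and> w e \<in> A e \<and> c e \<ge> 0)"

definition lower :: "('a \<Rightarrow> real set) \<Rightarrow> 'a \<Rightarrow> real" where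
  "lower A e = Inf (A e)"

definition upper :: "('a \<Rightarrow> real set) \<Rightarrow> 'a \<Rightarrow> real" where
  "upper A e = Sup (A e)"

definition trivial :: "('a \<Rightarrow> real set) \<Rightarrow> ('a \<Rightarrow> real) \<Rightarrow> 'a \<Rightarrow> bool" where
  "trivial A w e \<longleftrightarrow> A e = {w e}"

definition EL :: "'a set \<Rightarrow> ('a \<Rightarrow> real set) \<Rightarrow> ('a \<Rightarrow> real) \<Rightarrow> real \<Rightarrow> 'a set" where
  "EL E A w x = {e\<in>E. lower A e = x \<and> \<not> trivial A w e}"

definition is_mwb :: "'a set \<Rightarrow> ('a set \<Rightarrow> bool) \<Rightarrow> ('a \<Rightarrow> real) \<Rightarrow> 'a set \<Rightarrow> bool" where
  "is_mwb E indep w' B \<longleftrightarrow> basis_of indep E B \<and>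
     (\<forall>B'. basis_of indep E B' \<longrightarrow> sum w' B \<le> sum w' B')"

definition weight_assignment :: "'a set \<Rightarrow> ('a \<Rightarrow> real set) \<Rightarrow> ('a \<Rightarrow> real) \<Rightarrow> bool" where
  "weight_assignment E A w' \<longleftrightarrow> (\<forall>e\<in>E. w' e \<in> A e)"

definition consistent :: "('a \<Rightarrow> real) \<Rightarrow> 'a set \<Rightarrow> ('a \<Rightarrow> real) \<Rightarrow> bool" where
  "consistent w Q w' \<longleftrightarrow> (\<forall>e\<in>Q. w' e = w e)"

definition verifies :: "'a set \<Rightarrow> ('a set \<Rightarrow> bool) \<Rightarrow> ('a \<Rightarrow> real set) \<Rightarrow> ('a \<Rightarrow> real) \<Rightarrow> 'a set \<Rightarrow> 'a set \<Rightarrow> bool" where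
  "verifies E indep A w Q B \<longleftrightarrow>
     (\<forall>w'. weight_assignment E A w' \<and> consistent w Q w' \<longrightarrow> is_mwb E indep w' B)"

definition certificate :: "'a set \<Rightarrow> ('a set \<Rightarrow> bool) \<Rightarrow> ('a \<Rightarrow> real set) \<Rightarrow> ('a \<Rightarrow> real) \<Rightarrow> 'a set \<Rightarrow> bool" where
  "certificate E indep A w Q \<longleftrightarrow> Q \<subseteq> E \<and> (\<exists>B. verifies E indep A w Q B)"

definition c_star :: "'a set \<Rightarrow> ('a set \<Rightarrow> bool) \<Rightarrow> ('a \<Rightarrow> real set) \<Rightarrow> ('a \<Rightarrow> real) \<Rightarrow> ('a \<Rightarrow> real) \<Rightarrow> real" where
  "c_star E indep A w c = Min {sum c Q | Q. certificate E indep A w Q}"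

definition compatible_minor :: "'a set \<Rightarrow> ('a set \<Rightarrow> bool) \<Rightarrow> ('a \<Rightarrow> real set) \<Rightarrow> ('a \<Rightarrow> real) \<Rightarrow> ('a \<Rightarrow> real) \<Rightarrow> 'a set \<Rightarrow> 'a set \<Rightarrow> bool" where
  "compatible_minor E indep A w c D K \<longleftrightarrow> D \<subseteq> E \<and> K \<subseteq> E \<and>
     (\<exists>Q B. Q \<subseteq> E \<and> sum c Q = c_star E indep A w c \<and> verifies E indep A w Q B \<and>
            K \<subseteq> B \<and> D \<inter> B = {})"

end

theory Submission
  imports Defs
begin

lemma unc_area_bdd:
  assumes "unc_area S" shows "bdd_below S"
proof -
  obtain F where F: "finite F" "\<forall>I\<in>F. unc_interval I" "S = \<Union>F"
    using assms unfolding unc_area_def by blast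
  have "\<forall>I\<in>F. bdd_below I"
  proof
    fix I assume "I \<in> F"
    then have "unc_interval I" using F by blast
    then show "bdd_below I" unfolding unc_interval_def by auto
  qed
  then have "bdd_below (\<Union>F)" using F(1) bdd_below_UN[of F "\<lambda>I. I"] by simp
  then show ?thesis using F(3) by simp
qed

lemma ext_max:
  assumes "finite X" "indep I" "I \<subseteq> X"
  shows "\<exists>S. I \<subseteq> S \<and> S \<subseteq> X \<and> indep S \<and> (\<forall>x\<in>X - S. \<not> indep (insert x S))"
proof -
  let ?P = "\<lambda>S. I \<subseteq> S \<and> S \<subseteq> X \<and> indep S"
  have "\<forall>y. ?P y \<longrightarrow> card y < card X + 1"
    using assms(1) by (simp add: card_mono less_Suc_eq_le)
  then obtain S where S: "?P S" "\<forall>T. ?P T \<longrightarrow> card T \<le> card S"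
    using ex_has_greatest_nat[of ?P I card "card X + 1"] assms by blast
  have "\<not> indep (insert x S)" if "x \<in> X - S" for x
  proof
    assume "indep (insert x S)"
    then have "?P (insert x S)" using S that by auto
    then have "card (insert x S) \<le> card S" using S by blast
    moreover have "finite S" using S assms(1) finite_subset by blast
    ultimately show False using that by simp
  qed
  then show ?thesis using S by blast
qed

lemma same_card_basis:
  assumes "matroid E indep" "basis_of indep E B" "indep B'" "card B' = card B"
  shows "basis_of indep E B'"
proof -
  have fin: "finite E" and sub: "\<forall>I. indep I \<longrightarrow> I \<subseteq> E"
    and aug: "\<forall>I J. indep I \<and> indep J \<and> card I < card J \<longrightarrow> (\<exists>x\<in>J - I. indep (insert x I))"
    using assms(1) unfolding matroid_def by auto
  have B: "B \<subseteq> E" "indep B" "\<forall>B''. B \<subseteq> B'' \<and> B'' \<subseteq> E \<and> indep B'' \<longrightarrow> B'' = B"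
    using assms(2) unfolding basis_of_def by auto
  have "B'' = B'" if h: "B' \<subseteq> B''" "B'' \<subseteq> E" "indep B''" for B''
  proof (rule ccontr)
    assume "B'' \<noteq> B'"
    then have "B' \<subset> B''" using h by blast
    moreover have "finite B''" using h fin finite_subset by blast
    ultimately have "card B' < card B''" by (simp add: psubset_card_mono)
    then have "card B < card B''" using assms(4) by simp
    then obtain x where x: "x \<in> B'' - B" "indep (insert x B)" using aug B(2) h(3) by blast
    then have "insert x B \<subseteq> E" using sub by blast
    then have "insert x B = B" using B(3) x by blast
    then show False using x by blast
  qed
  then show ?thesis unfolding basis_of_def using assms(3) sub by blast
qed

lemma exchange:
  assumes "matroid E indep" "basis_of indep E B" "e \<in> B" "K \<subseteq> B - {e}"
    "indep ((C - {e}) \<union> K)" "\<not> indep (C \<union> K)" "e \<in> C" "C \<subseteq> E"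
  shows "\<exists>f\<in>C - B. indep (insert f (B - {e}))"
proof (rule ccontr)
  assume nf: "\<not> (\<exists>f\<in>C - B. indep (insert f (B - {e})))"
  have fin: "finite E" and sub: "\<And>I. indep I \<Longrightarrow> I \<subseteq> E"
    and dc: "\<And>I J. indep J \<Longrightarrow> I \<subseteq> J \<Longrightarrow> indep I"
    and aug: "\<And>I J. indep I \<Longrightarrow> indep J \<Longrightarrow> card I < card J \<Longrightarrow> (\<exists>x\<in>J - I. indep (insert x I))"
    using assms(1) unfolding matroid_def by blast+
  have B: "B \<subseteq> E" "indep B" using assms(2) unfolding basis_of_def by auto
  have finB: "finite B" using B fin finite_subset by blast
  define B0 where "B0 = B - {e}"
  define I where "I = (C - {e}) \<union> K"
  have B0: "indep B0" unfolding B0_def by (rule dc[OF B(2)]) blast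
  have "I \<union> B0 \<subseteq> E" unfolding I_def B0_def using assms(4,8) B(1) by blast
  then have "finite (I \<union> B0)" using fin finite_subset by blast
  moreover have "indep I" "I \<subseteq> I \<union> B0" unfolding I_def using assms(5) by auto
  ultimately obtain S where S: "I \<subseteq> S" "S \<subseteq> I \<union> B0" "indep S"
      "\<forall>x\<in>(I \<union> B0) - S. \<not> indep (insert x S)"
    using ext_max[of "I \<union> B0" indep I] by blast
  have c1: "\<not> card S < card B0"
  proof
    assume "card S < card B0"
    then obtain x where "x \<in> B0 - S" "indep (insert x S)" using aug[OF S(3) B0] by blast
    then show False using S(4) by blast
  qed
  have c2: "\<not> card B0 < card S"
  proof
    assume "card B0 < card S"
    then obtain x where x: "x \<in> S - B0" "indep (insert x B0)" using aug[OF B0 S(3)] by blast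
    then have "x \<in> I" using S(2) by blast
    then have "x \<in> C - B" using x assms(4) unfolding I_def B0_def by blast
    then show False using nf x unfolding B0_def by blast
  qed
  have "card B0 = card B - 1" unfolding B0_def using finB assms(3) by simp
  moreover have "card B > 0" using finB assms(3) card_gt_0_iff by blast
  ultimately have "card S < card B" using c1 c2 by linarith
  then obtain x where x: "x \<in> B - S" "indep (insert x S)" using aug[OF S(3) B(2)] by blast
  have "x \<notin> B0" using x S(4) by blast
  then have "x = e" using x unfolding B0_def by blast
  then have "C \<union> K \<subseteq> insert x S" using S(1) unfolding I_def by blast
  then have "indep (C \<union> K)" using dc x(2) by blast
  then show False using assms(6) by blast
qed

lemma swap_sum:
  fixes g :: "'a \<Rightarrow> real"
  assumes "finite B" "e \<in> B" "f \<notin> B"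
  shows "sum g (insert f (B - {e})) = sum g B - g e + g f"
proof -
  have "sum g (insert f (B - {e})) = g f + sum g (B - {e})" using assms by simp
  also have "sum g (B - {e}) = sum g B - g e" using assms by (simp add: sum_diff1)
  finally show ?thesis by simp
qed


theorem lemma18:
  fixes E :: "'a set" and indep :: "'a set \<Rightarrow> bool" and A :: "'a \<Rightarrow> real set"
    and w c :: "'a \<Rightarrow> real" and D K C :: "'a set" and e :: 'a
  assumes "wu_matroid E indep A w c"
    and "compatible_minor E indep A w c D K"
    and "e \<in> E - (D \<union> K)" and "\<not> trivial A w e"
    and "circuit_of (E - (D \<union> K)) (minor_indep E indep D K) C" and "e \<in> C"
    and "w e = lower A e"
    and "\<forall>f\<in>C. w f \<le> w e"
    and "\<forall>f\<in>C \<inter> EL E A w (w e). c f \<le> c e"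
  shows "compatible_minor E indep A w c (D \<union> {e}) K"
proof -
  have mat: "matroid E indep" and area: "\<forall>x\<in>E. unc_area (A x) \<and> w x \<in> A x \<and> c x \<ge> 0"
    using assms(1) unfolding wu_matroid_def by auto
  have fin: "finite E" and sub: "\<forall>I. indep I \<longrightarrow> I \<subseteq> E"
    and dc: "\<forall>I J. indep J \<and> I \<subseteq> J \<longrightarrow> indep I"
    using mat unfolding matroid_def by auto
  have DK: "D \<subseteq> E" "K \<subseteq> E" using assms(2) unfolding compatible_minor_def by blast+
  obtain Q B where QB: "Q \<subseteq> E" "sum c Q = c_star E indep A w c" "verifies E indep A w Q B"
      "K \<subseteq> B" "D \<inter> B = {}"
    using assms(2) unfolding compatible_minor_def by blast
  have wa: "weight_assignment E A w" using area unfolding weight_assignment_def by auto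
  have "is_mwb E indep w B" using QB(3) wa unfolding verifies_def consistent_def by blast
  then have Bb: "basis_of indep E B" unfolding is_mwb_def by auto
  have BE: "B \<subseteq> E" "indep B" using Bb unfolding basis_of_def by auto
  have finB: "finite B" using BE fin finite_subset by blast
  have eE: "e \<in> E" "e \<notin> D" "e \<notin> K" using assms(3) by auto
  show ?thesis
  proof (cases "e \<in> B")
    case False
    then show ?thesis unfolding compatible_minor_def using QB DK eE by blast
  next
    case True
    have Csub: "C \<subseteq> E - (D \<union> K)" and Cdep: "\<not> minor_indep E indep D K C"
      and Cmin: "minor_indep E indep D K (C - {e})"
      using assms(5,6) unfolding circuit_of_def by auto
    have Kind: "indep K" using dc BE QB(4) by blast
    have KK: "basis_of indep K K" using Kind unfolding basis_of_def by blast
    have Juniq: "J = K" if "basis_of indep K J" for J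
      using that Kind unfolding basis_of_def by blast
    have I1: "indep ((C - {e}) \<union> K)" using Cmin Juniq unfolding minor_indep_def by blast
    have I2: "\<not> indep (C \<union> K)" using Cdep KK Csub unfolding minor_indep_def by blast
    obtain f where f: "f \<in> C" "f \<notin> B" "indep (insert f (B - {e}))"
      using exchange[OF mat Bb True _ I1 I2 assms(6)] QB(4) eE Csub by blast
    define B' where "B' = insert f (B - {e})"
    have fE: "f \<in> E" "f \<notin> D" "f \<notin> K" "f \<noteq> e" using f Csub True by auto
    have "card B' = card B" unfolding B'_def using finB True f by (metis card_Suc_Diff1 card_insert_disjoint finite_Diff Diff_iff)
    then have B'b: "basis_of indep E B'" using same_card_basis[OF mat Bb] f unfolding B'_def by blast
    have key: "w' e \<le> w' f" if "weight_assignment E A w'" "consistent w Q w'" for w'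
    proof -
      have "is_mwb E indep w' B" using QB(3) that unfolding verifies_def by blast
      then have "sum w' B \<le> sum w' B'" using B'b unfolding is_mwb_def by blast
      then show ?thesis unfolding B'_def using swap_sum[OF finB True f(2)] by simp
    qed
    have bdd: "bdd_below (A x)" if "x \<in> E" for x using area that by (simp add: unc_area_bdd)
    have low: "lower A x \<le> y" if "x \<in> E" "y \<in> A x" for x y
      unfolding lower_def using bdd[OF that(1)] that(2) by (simp add: cInf_lower)
    have eQ: "e \<in> Q"
    proof (rule ccontr)
      assume nQ: "e \<notin> Q"
      have "A e \<noteq> {w e}" using assms(4) unfolding trivial_def by blast
      then obtain y where y: "y \<in> A e" "y \<noteq> w e" using area eE by blast
      then have "y > w e" using low[OF eE(1) y(1)] assms(7) by simp
      define w' where "w' = w(e := y)"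
      have "weight_assignment E A w'" using wa y unfolding weight_assignment_def w'_def by auto
      moreover have "consistent w Q w'" using nQ unfolding consistent_def w'_def by auto
      ultimately have "w' e \<le> w' f" by (rule key)
      then have "y \<le> w f" using fE unfolding w'_def by simp
      then show False using assms(8) f(1) \<open>y > w e\<close> by fastforce
    qed
    have fnQ: "lower A f = w e" if "f \<notin> Q"
    proof -
      have "\<not> lower A f < w e"
      proof
        assume "lower A f < w e"
        then obtain x where x: "x \<in> A f" "x < w e"
          using cInf_lessD[of "A f" "w e"] area fE unfolding lower_def by blast
        define w' where "w' = w(f := x)"
        have "weight_assignment E A w'" using wa x unfolding weight_assignment_def w'_def by auto
        moreover have "consistent w Q w'" using that unfolding consistent_def w'_def by auto
        ultimately have "w' e \<le> w' f" by (rule key)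
        then show False using fE x unfolding w'_def by simp
      qed
      moreover have "lower A f \<le> w f" using low area fE by blast
      ultimately show ?thesis using assms(8) f(1) by fastforce
    qed
    have wf: "w f = w e"
    proof (cases "f \<in> Q")
      case True
      have "w e \<le> w f" using key[OF wa] unfolding consistent_def by blast
      then show ?thesis using assms(8) f(1) by fastforce
    next
      case False
      then show ?thesis using fnQ low[of f "w f"] area fE assms(8) f(1) by fastforce
    qed
    define Q' where "Q' = (Q - {e}) \<union> (if trivial A w f then {} else {f})"
    have Q'E: "Q' \<subseteq> E" using QB(1) fE unfolding Q'_def by auto
    have ver: "verifies E indep A w Q' B'"
      unfolding verifies_def
    proof (intro allI impI)
      fix w' assume h: "weight_assignment E A w' \<and> consistent w Q' w'"
      define w'' where "w'' = w'(e := w e)"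
      have "weight_assignment E A w''" using h area eE unfolding weight_assignment_def w''_def by auto
      moreover have "consistent w Q w''" using h unfolding consistent_def w''_def Q'_def by auto
      ultimately have mw: "is_mwb E indep w'' B" using QB(3) unfolding verifies_def by blast
      have w'f: "w' f = w f"
      proof (cases "trivial A w f")
        case True
        have "w' f \<in> A f" using h fE unfolding weight_assignment_def by blast
        then show ?thesis using True unfolding trivial_def by simp
      next
        case False
        then show ?thesis using h unfolding consistent_def Q'_def by auto
      qed
      have s1: "sum w'' B' = sum w'' B" unfolding B'_def using swap_sum[OF finB True f(2), of w''] w'f wf fE
        unfolding w''_def by simp
      have s2: "sum w' B' = sum w'' B'" unfolding B'_def w''_def using fE by (intro sum.cong) auto
      have "sum w' B' \<le> sum w' X" if "basis_of indep E X" for X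
      proof -
        have XE: "X \<subseteq> E" using that unfolding basis_of_def by blast
        have "sum w'' B \<le> sum w'' X" using mw that unfolding is_mwb_def by blast
        moreover have "sum w'' X \<le> sum w' X"
        proof (rule sum_mono)
          fix x assume "x \<in> X"
          show "w'' x \<le> w' x"
          proof (cases "x = e")
            case True
            have "w' e \<in> A e" using h eE unfolding weight_assignment_def by blast
            then show ?thesis using True low[OF eE(1)] assms(7) unfolding w''_def by simp
          qed (simp add: w''_def)
        qed
        ultimately show ?thesis using s1 s2 by linarith
      qed
      then show "is_mwb E indep w' B'" using B'b unfolding is_mwb_def by blast
    qed
    have finQ: "finite Q" using QB(1) fin finite_subset by blast
    have cost: "sum c Q' \<le> sum c Q"
    proof -
      have ce: "c e \<ge> 0" using area eE by blast
      have sQe: "sum c (Q - {e}) = sum c Q - c e" using finQ eQ by (simp add: sum_diff1)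
      show ?thesis
      proof (cases "trivial A w f \<or> f \<in> Q")
        case True
        then have "Q' = Q - {e}" unfolding Q'_def using fE by auto
        then show ?thesis using sQe ce by simp
      next
        case False
        then have "Q' = insert f (Q - {e})" unfolding Q'_def by auto
        moreover have "f \<in> EL E A w (w e)" unfolding EL_def using False fnQ fE by auto
        then have "c f \<le> c e" using assms(9) f(1) by blast
        ultimately show ?thesis using sQe False finQ by simp
      qed
    qed
    have "certificate E indep A w Q'" unfolding certificate_def using Q'E ver by blast
    moreover have "finite {sum c Q | Q. certificate E indep A w Q}"
    proof (rule finite_subset)
      show "{sum c Q | Q. certificate E indep A w Q} \<subseteq> sum c ` Pow E"
        unfolding certificate_def by auto
    qed (simp add: fin)
    ultimately have "c_star E indep A w c \<le> sum c Q'" unfolding c_star_def by (auto intro: Min_le)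
    then have "sum c Q' = c_star E indep A w c" using cost QB(2) by linarith
    moreover have "K \<subseteq> B'" "(D \<union> {e}) \<inter> B' = {}" unfolding B'_def using QB(4,5) eE fE by auto
    ultimately show ?thesis unfolding compatible_minor_def using DK eE Q'E ver by blast
  qed
qed

end
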